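(* Let $g$ be analytic, univalent and convex in $\mathbb{D}$ (i.e. $g$ maps $\mathbb{D}$ one-to-one onto a convex domain), and let $f(z)=\sum_{n=0}^\infty a_n z^n$ be analytic in $\mathbb{D}$ with $f\prec g$. Let $\lambda=\operatorname{dist}(g(0),\partial g(\mathbb{D}))$ and assume $\lambda\le 1$. For $0\le r<1$ define $$T_f(r)=\sum_{n=1}^\infty |a_n|r^n+\left(\frac{1}{2-\lambda}+\frac{r}{1-r}\right)\sum_{n=1}^\infty|a_n|^2r^{2n}.$$ Then $T_f(r)\le\lambda$ for all $0\le r\le r_*$, where $r_*\approx0.24683$ is the unique root of $3r^3-5r^2-3r+1=0$ in $(0,1)$. Moreover, for any $\lambda\in(0,1)$ there is a uniquely defined $r_0\in\left(r_*,\tfrac13\right)$, namely the solution in this interval of $$4r^3\lambda^2-(7r^3+3r^2-3r+1)\lambda+6r^3-2r^2-6r+2=0,$$ such that $T_f(r)\le\lambda$ for all $r\in[0,r_0]$.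
   Context: $\mathbb{D}$ is the open unit disk; $\operatorname{dist}(c,\partial\Omega)$ is the Euclidean distance from $c$ to the boundary of $\Omega$. $f\prec g$ means there is an analytic $\omega:\mathbb{D}\to\mathbb{D}$ with $\omega(0)=0$ and $f=g\circ\omega$. *)

theory Defs
  imports "HOL-Complex_Analysis.Complex_Analysis"
begin

definition subordinate :: "(complex \<Rightarrow> complex) \<Rightarrow> (complex \<Rightarrow> complex) \<Rightarrow> bool" where
  "subordinate f g \<longleftrightarrow>
     (\<exists>\<omega>. \<omega> holomorphic_on ball 0 1 \<and> \<omega> ` ball 0 1 \<subseteq> ball 0 1 \<and> \<omega> 0 = 0 \<and>
          (\<forall>z\<in>ball 0 1. f z = g (\<omega> z)))"

definition T_f :: "(nat \<Rightarrow> complex) \<Rightarrow> real \<Rightarrow> real \<Rightarrow> real" where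
  "T_f a lam r =
     (\<Sum>n. norm (a (Suc n)) * r ^ Suc n)
     + (1 / (2 - lam) + r / (1 - r)) * (\<Sum>n. (norm (a (Suc n)))\<^sup>2 * r ^ (2 * Suc n))"

definition r_star :: real where
  "r_star = (THE r. 0 < r \<and> r < 1 \<and> 3 * r ^ 3 - 5 * r ^ 2 - 3 * r + 1 = 0)"

end

theory Submission
  imports Defs
begin

definition rou :: "nat \<Rightarrow> complex" where "rou N = exp (2 * of_real pi * \<i> / of_nat N)"

lemma rou_pow_N: "N > 0 \<Longrightarrow> rou N ^ N = 1"
proof -
  assume N: "N > 0"
  have "rou N ^ N = exp (of_nat N * (2 * of_real pi * \<i> / of_nat N))"
    unfolding rou_def by (rule exp_of_nat_mult[symmetric])
  also have "\<dots> = exp (2 * of_real pi * \<i>)" using N by simp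
  finally show ?thesis by simp
qed

lemma norm_rou [simp]: "norm (rou N) = 1"
  unfolding rou_def by (simp add: norm_exp_eq_Re)

lemma rou_pow_eq_1: assumes N: "N > 0" shows "rou N ^ m = 1 \<longleftrightarrow> N dvd m"
proof
  assume "N dvd m"
  then obtain q where "m = N * q" by auto
  then show "rou N ^ m = 1" using rou_pow_N[OF N] by (simp add: power_mult)
next
  assume h: "rou N ^ m = 1"
  have "rou N ^ m = exp (of_nat m * (2 * of_real pi * \<i> / of_nat N))"
    unfolding rou_def by (rule exp_of_nat_mult[symmetric])
  with h obtain k :: int where k: "real m * (2 * pi) / real N = 2 * of_int k * pi"
    by (auto simp: exp_eq_1)
  then have "real m = real N * of_int k" using N by (simp add: field_simps)
  then have "int m = int N * k" by (metis of_int_eq_iff of_int_mult of_int_of_nat_eq)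
  then show "N dvd m" by (metis dvd_triv_left int_dvd_int_iff)
qed

lemma rou_sum: assumes N: "N > 0"
  shows "(\<Sum>j<N. rou N ^ (j * m)) = (if N dvd m then of_nat N else 0)"
proof -
  have "(\<Sum>j<N. rou N ^ (j * m)) = (\<Sum>j<N. (rou N ^ m) ^ j)"
    by (intro sum.cong refl) (metis power_mult mult.commute)
  also have "\<dots> = (if rou N ^ m = 1 then of_nat N else (1 - (rou N ^ m) ^ N) / (1 - rou N ^ m))"
    by (rule sum_gp_strict)
  also have "(rou N ^ m) ^ N = 1"
    by (metis power_mult mult.commute power_one rou_pow_N[OF N])
  finally show ?thesis using rou_pow_eq_1[OF N] by simp
qed

lemma dvd_aux1:
  fixes N n k :: nat
  assumes "n < N" "N dvd (k + (N - n))" "k \<noteq> n"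
  shows "N \<le> k"
proof -
  obtain q where q: "k + (N - n) = N * q" using assms(2) by (auto elim!: dvdE)
  consider "q = 0" | "q = 1" | "q \<ge> 2" by linarith
  then show ?thesis
  proof cases
    case 1 then show ?thesis using q assms by simp
  next
    case 2 then show ?thesis using q assms by simp
  next
    case 3
    then have "N * q \<ge> N * 2" by (intro mult_le_mono2)
    then show ?thesis using q assms by linarith
  qed
qed

lemma dvd_aux2:
  fixes N n k :: nat
  assumes "n \<ge> 1" "N dvd (k + n)"
  shows "N - n \<le> k"
proof -
  have "k + n > 0" using assms by simp
  then have "N \<le> k + n" using assms(2) by (simp add: dvd_imp_le)
  then show ?thesis by simp
qed

lemma carath_r:
  fixes c :: "nat \<Rightarrow> complex" and F :: "complex \<Rightarrow> complex"
  assumes S: "\<And>z. norm z < 1 \<Longrightarrow> (\<lambda>k. c k * z ^ k) sums F z"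
    and P: "\<And>z. norm z < 1 \<Longrightarrow> Re (F z) \<ge> 0"
    and n: "n \<ge> 1" and r: "0 < r" "r < 1"
  shows "norm (c n) * r ^ n \<le> 2 * Re (c 0)"
proof -
  define d where "d k = norm (c k) * r ^ k" for k
  define b where "b k = c k * of_real r ^ k" for k
  have nb: "norm (b k) = d k" for k using r by (simp add: b_def d_def norm_mult norm_power)
  have "norm (of_real ((1 + r) / 2) :: complex) < 1" using r by (subst norm_of_real) simp
  from sums_summable[OF S[OF this]]
  have "summable (\<lambda>k. c k * of_real ((1 + r) / 2) ^ k)" .
  moreover have "norm (of_real r :: complex) < norm (of_real ((1 + r) / 2) :: complex)"
    using r by (simp only: norm_of_real) simp
  ultimately have "summable (\<lambda>k. norm (c k * of_real r ^ k))" by (rule powser_insidea)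
  then have sd: "summable d" using r unfolding d_def[abs_def] by (simp add: norm_mult norm_power)
  have d0: "d k \<ge> 0" for k using r by (simp add: d_def)
  have summ: "summable h" if "\<And>k. norm (h k) \<le> d k" for h :: "nat \<Rightarrow> complex"
    by (rule summable_comparison_test[OF _ sd]) (use that in auto)
  define tl where "tl M = (\<Sum>k. if M \<le> k then d k else 0)" for M
  have stl: "summable (\<lambda>k. if M \<le> k then d k else 0)" for M
    by (rule summable_comparison_test[OF _ sd]) (use d0 in auto)
  have bound: "norm (suminf h) \<le> tl M"
    if hb: "\<And>k. norm (h k) \<le> (if M \<le> k then d k else 0)" for h :: "nat \<Rightarrow> complex" and M
  proof -
    have sn: "summable (\<lambda>k. norm (h k))"
      by (rule summable_comparison_test[OF _ stl[of M]]) (use hb in auto)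
    have "norm (suminf h) \<le> (\<Sum>k. norm (h k))" by (rule summable_norm[OF sn])
    also have "\<dots> \<le> tl M" unfolding tl_def by (rule suminf_le[OF hb sn stl])
    finally show ?thesis .
  qed
  have tl_mono: "tl M \<le> tl M'" if "M' \<le> M" for M M'
    unfolding tl_def by (rule suminf_le[OF _ stl stl]) (use that d0 in auto)
  have tl_lim: "tl \<longlonglongrightarrow> 0"
  proof -
    have tleq: "tl M = suminf d - sum d {..<M}" for M
    proof -
      have "tl M = (\<Sum>i. (if M \<le> i + M then d (i + M) else 0)) + (\<Sum>i<M. if M \<le> i then d i else 0)"
        unfolding tl_def by (rule suminf_split_initial_segment[OF stl])
      also have "\<dots> = (\<Sum>i. d (i + M))" by simp
      also have "\<dots> = suminf d - sum d {..<M}"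
        using suminf_split_initial_segment[OF sd, of M] by simp
      finally show ?thesis .
    qed
    moreover have "(\<lambda>M. suminf d - sum d {..<M}) \<longlonglongrightarrow> suminf d - suminf d"
      by (intro tendsto_diff tendsto_const summable_LIMSEQ[OF sd])
    moreover have "tl = (\<lambda>M. suminf d - sum d {..<M})" by (intro ext tleq)
    ultimately show ?thesis by simp
  qed
  have ident: "(\<Sum>j<N. F (of_real r * rou N ^ j) * rou N ^ (j * m))
      = of_nat N * (\<Sum>k. if N dvd (k + m) then b k else 0)" if N: "N > 0" for N m
  proof -
    have e: "F (of_real r * rou N ^ j) = (\<Sum>k. b k * rou N ^ (j * k))" for j
    proof -
      have "norm (of_real r * rou N ^ j) < 1" using r by (simp add: norm_mult norm_power)
      from sums_unique[OF S[OF this]]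
      show ?thesis by (simp add: b_def power_mult_distrib power_mult mult.assoc)
    qed
    have sm: "summable (\<lambda>k. b k * rou N ^ (j * (k + m)))" for j
      by (rule summ) (simp add: norm_mult norm_power nb)
    have "(\<Sum>j<N. F (of_real r * rou N ^ j) * rou N ^ (j * m))
        = (\<Sum>j<N. \<Sum>k. b k * rou N ^ (j * (k + m)))"
    proof (intro sum.cong refl)
      fix j
      have s1: "summable (\<lambda>k. b k * rou N ^ (j * k))"
        by (rule summ) (simp add: norm_mult norm_power nb)
      show "F (of_real r * rou N ^ j) * rou N ^ (j * m) = (\<Sum>k. b k * rou N ^ (j * (k + m)))"
        unfolding e suminf_mult2[OF s1]
        by (simp add: distrib_left power_add mult.assoc)
    qed
    also have "\<dots> = (\<Sum>k. \<Sum>j<N. b k * rou N ^ (j * (k + m)))"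
      by (rule suminf_sum[symmetric]) (rule sm)
    also have "\<dots> = (\<Sum>k. of_nat N * (if N dvd (k + m) then b k else 0))"
      by (intro suminf_cong) (simp add: sum_distrib_left[symmetric] rou_sum[OF N] mult.commute)
    also have "\<dots> = of_nat N * (\<Sum>k. if N dvd (k + m) then b k else 0)"
      by (rule suminf_mult) (rule summ, simp add: nb d0)
    finally show ?thesis .
  qed
  have key: "d n \<le> 2 * Re (c 0) + 4 * tl M" if M: "M \<ge> 1" for M
  proof -
    define N where "N = M + n"
    have N: "N > 0" "n < N" "N - n = M" using M n by (auto simp: N_def)
    define \<omega> where "\<omega> = rou N"
    define X where "X j = F (of_real r * \<omega> ^ j)" for j
    define Pp where "Pp = (\<Sum>k. if N dvd (k + (N - n)) then b k else 0)"
    define Q where "Q = (\<Sum>k. if N dvd (k + n) then b k else 0)"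
    define R where "R = (\<Sum>k. if N dvd (k + 0) then b k else 0)"
    have idP: "(\<Sum>j<N. X j * \<omega> ^ (j * (N - n))) = of_nat N * Pp"
      unfolding X_def \<omega>_def Pp_def by (rule ident[OF N(1)])
    have idQ: "(\<Sum>j<N. X j * \<omega> ^ (j * n)) = of_nat N * Q"
      unfolding X_def \<omega>_def Q_def by (rule ident[OF N(1)])
    have idR: "(\<Sum>j<N. X j) = of_nat N * R"
      using ident[OF N(1), of 0] unfolding X_def \<omega>_def R_def by simp
    have cj: "cnj (\<omega> ^ (j * n)) = \<omega> ^ (j * (N - n))" for j
    proof -
      have n1: "norm (\<omega> ^ (j * n)) = 1" by (simp add: \<omega>_def norm_power)
      have a: "cnj (\<omega> ^ (j * n)) * \<omega> ^ (j * n) = 1"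
        using complex_norm_square[of "\<omega> ^ (j * n)"] n1 by (simp add: mult.commute)
      have "\<omega> ^ (j * (N - n)) * \<omega> ^ (j * n) = \<omega> ^ (j * N)"
      proof -
        have "(N - n) + n = N" using N by simp
        then have "j * (N - n) + j * n = j * N" by (metis add_mult_distrib2)
        then show ?thesis by (metis power_add)
      qed
      also have "\<dots> = 1" using rou_pow_N[OF N(1)] by (simp add: \<omega>_def power_mult mult.commute)
      finally have b: "\<omega> ^ (j * (N - n)) * \<omega> ^ (j * n) = 1" .
      have nz: "\<omega> ^ (j * n) \<noteq> 0" using n1 by (metis norm_zero zero_neq_one)
      from a b nz show ?thesis by (metis mult_right_cancel)
    qed
    have "of_nat N * (Pp + cnj Q) = (\<Sum>j<N. (X j + cnj (X j)) * \<omega> ^ (j * (N - n)))"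
    proof -
      have "of_nat N * (Pp + cnj Q) = of_nat N * Pp + cnj (of_nat N * Q)" by (simp add: distrib_left)
      also have "\<dots> = (\<Sum>j<N. X j * \<omega> ^ (j * (N - n))) + (\<Sum>j<N. cnj (X j) * \<omega> ^ (j * (N - n)))"
        unfolding idP idQ[symmetric] cnj_sum using cj by simp
      finally show ?thesis by (simp add: sum.distrib distrib_right)
    qed
    also have "\<dots> = (\<Sum>j<N. of_real (2 * Re (X j)) * \<omega> ^ (j * (N - n)))"
      by (simp add: complex_add_cnj)
    finally have eq1: "of_nat N * (Pp + cnj Q) = (\<Sum>j<N. of_real (2 * Re (X j)) * \<omega> ^ (j * (N - n)))" .
    have Xp: "Re (X j) \<ge> 0" for j
      unfolding X_def by (rule P) (use r in \<open>simp add: norm_mult norm_power \<omega>_def\<close>)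
    have "real N * norm (Pp + cnj Q) = norm (of_nat N * (Pp + cnj Q))" by (simp add: norm_mult)
    also have "\<dots> \<le> (\<Sum>j<N. norm (of_real (2 * Re (X j)) * \<omega> ^ (j * (N - n))))"
      unfolding eq1 by (rule norm_sum)
    also have "\<dots> = (\<Sum>j<N. 2 * Re (X j))"
      using Xp by (simp add: norm_mult norm_power \<omega>_def)
    also have "\<dots> = 2 * Re (of_nat N * R)" unfolding idR[symmetric] by (simp add: Re_sum sum_distrib_left)
    also have "\<dots> = real N * (2 * Re R)" by simp
    finally have i1: "norm (Pp + cnj Q) \<le> 2 * Re R" using N by simp
    have Qb: "norm Q \<le> tl M"
      unfolding Q_def by (rule bound) (use dvd_aux2[OF n] N nb d0 in auto)
    have Pp_split: "Pp = b n + (\<Sum>k. if N dvd (k + (N - n)) \<and> k \<noteq> n then b k else 0)"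
    proof -
      have "Pp = (\<Sum>k. (if k = n then b k else 0) + (if N dvd (k + (N - n)) \<and> k \<noteq> n then b k else 0))"
        unfolding Pp_def by (intro suminf_cong) (use N in auto)
      also have "\<dots> = (\<Sum>k. if k = n then b k else 0) + (\<Sum>k. if N dvd (k + (N - n)) \<and> k \<noteq> n then b k else 0)"
        by (intro suminf_add[symmetric] summ) (auto simp: nb d0)
      also have "(\<Sum>k. if k = n then b k else 0) = b n" by (rule sums_unique[symmetric, OF sums_single])
      finally show ?thesis .
    qed
    have Pb: "norm (\<Sum>k. if N dvd (k + (N - n)) \<and> k \<noteq> n then b k else 0) \<le> tl N"
      by (rule bound) (use dvd_aux1[OF N(2)] nb d0 in auto)
    have R_split: "R = b 0 + (\<Sum>k. if N dvd k \<and> k \<noteq> 0 then b k else 0)"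
    proof -
      have "R = (\<Sum>k. (if k = 0 then b k else 0) + (if N dvd k \<and> k \<noteq> 0 then b k else 0))"
        unfolding R_def by (intro suminf_cong) auto
      also have "\<dots> = (\<Sum>k. if k = 0 then b k else 0) + (\<Sum>k. if N dvd k \<and> k \<noteq> 0 then b k else 0)"
        by (intro suminf_add[symmetric] summ) (auto simp: nb d0)
      also have "(\<Sum>k. if k = 0 then b k else 0) = b 0" by (rule sums_unique[symmetric, OF sums_single])
      finally show ?thesis .
    qed
    have Rb: "norm (\<Sum>k. if N dvd k \<and> k \<noteq> 0 then b k else 0) \<le> tl N"
      by (rule bound) (use nb d0 in \<open>auto dest: dvd_imp_le\<close>)
    have ReR: "Re R \<le> Re (c 0) + tl N"
      using R_split Rb complex_Re_le_cmod[of "(\<Sum>k. if N dvd k \<and> k \<noteq> 0 then b k else 0)"]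
      by (simp add: b_def)
    have tlN: "tl N \<le> tl M" using tl_mono N by simp
    have "d n = norm (b n)" by (simp add: nb)
    also have "\<dots> \<le> norm Pp + tl N"
      using Pp_split Pb norm_triangle_ineq4[of Pp "(\<Sum>k. if N dvd (k + (N - n)) \<and> k \<noteq> n then b k else 0)"]
      by auto
    also have "norm Pp \<le> norm (Pp + cnj Q) + norm Q"
      using norm_triangle_ineq4[of "Pp + cnj Q" "cnj Q"] by simp
    finally show ?thesis using i1 Qb ReR tlN by linarith
  qed
  have "(\<lambda>M. 2 * Re (c 0) + 4 * tl M) \<longlonglongrightarrow> 2 * Re (c 0) + 4 * 0"
    by (intro tendsto_intros tl_lim)
  then have "d n \<le> 2 * Re (c 0) + 4 * 0"
    by (rule LIMSEQ_le_const) (use key in blast)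
  then show ?thesis by (simp add: d_def)
qed

lemma carath:
  fixes c :: "nat \<Rightarrow> complex" and F :: "complex \<Rightarrow> complex"
  assumes S: "\<And>z. norm z < 1 \<Longrightarrow> (\<lambda>k. c k * z ^ k) sums F z"
    and P: "\<And>z. norm z < 1 \<Longrightarrow> Re (F z) \<ge> 0"
    and n: "n \<ge> 1"
  shows "norm (c n) \<le> 2 * Re (c 0)"
proof -
  have lim: "((\<lambda>r. norm (c n) * r ^ n) \<longlongrightarrow> norm (c n) * 1 ^ n) (at_left (1::real))"
    by (intro tendsto_intros)
  have ev: "\<forall>\<^sub>F r in at_left (1::real). norm (c n) * r ^ n \<le> 2 * Re (c 0)"
    by (rule eventually_mono[OF eventually_at_left_real[of 0 "1::real"]])
       (auto intro: carath_r[OF S P n])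
  have "norm (c n) * 1 ^ n \<le> 2 * Re (c 0)"
    by (rule tendsto_upperbound[OF lim ev]) simp
  then show ?thesis by simp
qed

definition psi :: "real \<Rightarrow> real \<Rightarrow> real" where
  "psi lam r = 2 * r / (1 - r) + (1 / (2 - lam) + r / (1 - r)) * (4 * lam * r ^ 2 / (1 - r ^ 2))"

definition Qp :: "real \<Rightarrow> real \<Rightarrow> real" where
  "Qp r lam = 4 * r ^ 3 * lam ^ 2 - (7 * r ^ 3 + 3 * r ^ 2 - 3 * r + 1) * lam
             + 6 * r ^ 3 - 2 * r ^ 2 - 6 * r + 2"

lemma sq_lt1: "0 \<le> (r::real) \<Longrightarrow> r < 1 \<Longrightarrow> r ^ 2 < 1"
  by (simp add: abs_square_less_1)

lemma psi_alg:
  fixes A B C X r :: real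
  assumes "A \<noteq> 0" "B \<noteq> 0" "C \<noteq> 0"
  shows "(1 - (2 * r / B + (1 / A + r / B) * (X / (B * C)))) * (A * B ^ 2 * C)
       = A * B ^ 2 * C - 2 * r * A * B * C - (B + r * A) * X"
  using assms by (simp add: field_simps power2_eq_square)

lemma psi_Q:
  assumes "lam \<le> 1" "0 \<le> r" "r < 1"
  shows "(1 - psi lam r) * ((2 - lam) * (1 - r) ^ 2 * (1 + r)) = Qp r lam"
proof -
  have "2 - lam \<noteq> 0" "1 - r \<noteq> 0" "1 - r ^ 2 \<noteq> 0" "1 + r \<noteq> 0" using assms sq_lt1[of r]
    by auto
  have e: "1 - r ^ 2 = (1 - r) * (1 + r)" by (simp add: algebra_simps power2_eq_square)
  have "(1 - psi lam r) * ((2 - lam) * (1 - r) ^ 2 * (1 + r))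
     = (2 - lam) * (1 - r) ^ 2 * (1 + r) - 2 * r * (2 - lam) * (1 - r) * (1 + r)
       - ((1 - r) + r * (2 - lam)) * (4 * lam * r ^ 2)"
    unfolding psi_def e using psi_alg[OF \<open>2 - lam \<noteq> 0\<close> \<open>1 - r \<noteq> 0\<close> \<open>1 + r \<noteq> 0\<close>, of r "4 * lam * r ^ 2"]
    by (simp add: mult.assoc)
  also have "\<dots> = Qp r lam" unfolding Qp_def by (simp add: algebra_simps power2_eq_square power3_eq_cube)
  finally show ?thesis .
qed

lemma fac_pos:
  fixes lam r :: real
  assumes "lam \<le> 1" "0 \<le> r" "r < 1"
  shows "(2 - lam) * (1 - r) ^ 2 * (1 + r) > 0"
  using assms by (intro mult_pos_pos) auto

lemma psi_mono:
  assumes "0 \<le> lam" "lam \<le> lam'" "lam' \<le> 1" "0 \<le> r" "r \<le> r'" "r' < 1"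
  shows "psi lam r \<le> psi lam' r'"
proof -
  have m1: "r / (1 - r) \<le> r' / (1 - r')" using assms by (intro frac_le) auto
  have m2: "1 / (2 - lam) \<le> 1 / (2 - lam')" using assms by (intro frac_le) auto
  have r2: "r ^ 2 \<le> r' ^ 2" "r' ^ 2 < 1" using assms by (auto intro: power_mono simp: abs_square_less_1)
  have m3: "4 * lam * r ^ 2 / (1 - r ^ 2) \<le> 4 * lam' * r' ^ 2 / (1 - r' ^ 2)"
    using assms r2 by (intro frac_le mult_mono) auto
  have p1: "0 \<le> 1 / (2 - lam) + r / (1 - r)" using assms by auto
  have p2: "0 \<le> 4 * lam * r ^ 2 / (1 - r ^ 2)" using assms sq_lt1[of r] by auto
  have "(1 / (2 - lam) + r / (1 - r)) * (4 * lam * r ^ 2 / (1 - r ^ 2))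
      \<le> (1 / (2 - lam') + r' / (1 - r')) * (4 * lam' * r' ^ 2 / (1 - r' ^ 2))"
    using m1 m2 m3 p1 p2 by (intro mult_mono add_mono) auto
  moreover have "2 * r / (1 - r) \<le> 2 * r' / (1 - r')" using assms by (intro frac_le) auto
  ultimately show ?thesis unfolding psi_def by linarith
qed

lemma psi_strict_r:
  assumes "0 \<le> lam" "lam \<le> 1" "0 \<le> r" "r < r'" "r' < 1"
  shows "psi lam r < psi lam r'"
proof -
  have "psi lam r - 2 * r / (1 - r) \<le> psi lam r' - 2 * r' / (1 - r')"
  proof -
    have m1: "r / (1 - r) \<le> r' / (1 - r')" using assms by (intro frac_le) auto
    have r2: "r ^ 2 \<le> r' ^ 2" "r' ^ 2 < 1" using assms by (auto intro: power_mono simp: abs_square_less_1)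
    have m3: "4 * lam * r ^ 2 / (1 - r ^ 2) \<le> 4 * lam * r' ^ 2 / (1 - r' ^ 2)"
      using assms r2 by (intro frac_le mult_mono) auto
    have p1: "0 \<le> 1 / (2 - lam) + r / (1 - r)" using assms by auto
    have p2: "0 \<le> 4 * lam * r ^ 2 / (1 - r ^ 2)" using assms sq_lt1[of r] by auto
    have "(1 / (2 - lam) + r / (1 - r)) * (4 * lam * r ^ 2 / (1 - r ^ 2))
      \<le> (1 / (2 - lam) + r' / (1 - r')) * (4 * lam * r' ^ 2 / (1 - r' ^ 2))"
      using m1 m3 p1 p2 by (intro mult_mono add_mono) auto
    then show ?thesis unfolding psi_def by simp
  qed
  moreover have "2 * r / (1 - r) < 2 * r' / (1 - r')" using assms by (intro frac_less) auto
  ultimately show ?thesis by linarith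
qed

lemma psi_strict_lam:
  assumes "0 \<le> lam" "lam < 1" "0 < r" "r < 1"
  shows "psi lam r < psi 1 r"
proof -
  have r2: "0 < r ^ 2" "r ^ 2 < 1" using assms by (auto simp: abs_square_less_1)
  have m2: "1 / (2 - lam) \<le> 1 / (2 - 1)" using assms by (intro frac_le) auto
  have m3: "4 * lam * r ^ 2 / (1 - r ^ 2) < 4 * 1 * r ^ 2 / (1 - r ^ 2)"
    using assms r2 by (intro divide_strict_right_mono) auto
  have "0 \<le> r / (1 - r)" using assms by auto
  have "0 < 1 / (2 - lam)" using assms by auto
  have p1: "0 < 1 / (2 - 1) + r / (1 - r)" using \<open>0 \<le> r / (1 - r)\<close> by simp
  have p2: "0 \<le> 4 * lam * r ^ 2 / (1 - r ^ 2)" using assms sq_lt1[of r] by auto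
  have "(1 / (2 - lam) + r / (1 - r)) * (4 * lam * r ^ 2 / (1 - r ^ 2))
      < (1 / (2 - 1) + r / (1 - r)) * (4 * 1 * r ^ 2 / (1 - r ^ 2))"
    using m2 m3 p1 p2 assms add_pos_nonneg[OF \<open>0 < 1 / (2 - lam)\<close> \<open>0 \<le> r / (1 - r)\<close>]
    by (intro mult_le_less_imp_less add_mono) auto
  then show ?thesis unfolding psi_def by simp
qed

lemma Tf_bound:
  fixes a :: "nat \<Rightarrow> complex"
  assumes ab: "\<And>k. k \<ge> 1 \<Longrightarrow> norm (a k) \<le> 2 * lam"
    and l: "0 \<le> lam" "lam \<le> 1" and r: "0 \<le> r" "r < 1"
  shows "T_f a lam r \<le> lam * psi lam r"
proof -
  have g1: "(\<lambda>n. r ^ n) sums (1 / (1 - r))" using r by (intro geometric_sums) auto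
  have s1: "(\<lambda>n. 2 * lam * r ^ Suc n) sums (2 * lam * (r * (1 / (1 - r))))"
    using sums_mult[OF sums_mult[OF g1, of r], of "2 * lam"] by simp
  have r2: "0 \<le> r ^ 2" "r ^ 2 < 1" using r sq_lt1[of r] by auto
  have g2: "(\<lambda>n. (r ^ 2) ^ n) sums (1 / (1 - r ^ 2))" using r2 by (intro geometric_sums) auto
  have s2: "(\<lambda>n. (2 * lam) ^ 2 * (r ^ 2) ^ Suc n) sums ((2 * lam) ^ 2 * (r ^ 2 * (1 / (1 - r ^ 2))))"
    using sums_mult[OF sums_mult[OF g2, of "r ^ 2"], of "(2 * lam) ^ 2"] by simp
  have b1: "norm (a (Suc n)) * r ^ Suc n \<le> 2 * lam * r ^ Suc n" for n
    using ab[of "Suc n"] r by (intro mult_right_mono) auto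
  have b2: "(norm (a (Suc n)))\<^sup>2 * r ^ (2 * Suc n) \<le> (2 * lam) ^ 2 * (r ^ 2) ^ Suc n" for n
  proof -
    have "(norm (a (Suc n)))\<^sup>2 \<le> (2 * lam) ^ 2" using ab[of "Suc n"] by (intro power_mono) auto
    moreover have "r ^ (2 * Suc n) = (r ^ 2) ^ Suc n" by (rule power_mult)
    moreover have "0 \<le> (r ^ 2) ^ Suc n" by simp
    ultimately show ?thesis by (metis mult_right_mono)
  qed
  have sum1: "summable (\<lambda>n. norm (a (Suc n)) * r ^ Suc n)"
    by (rule summable_comparison_test[OF _ sums_summable[OF s1]]) (use b1 r in auto)
  have sum2: "summable (\<lambda>n. (norm (a (Suc n)))\<^sup>2 * r ^ (2 * Suc n))"
    by (rule summable_comparison_test[OF _ sums_summable[OF s2]]) (use b2 r in auto)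
  have i1: "(\<Sum>n. norm (a (Suc n)) * r ^ Suc n) \<le> 2 * lam * (r * (1 / (1 - r)))"
    using suminf_le[OF b1 sum1 sums_summable[OF s1]] sums_unique[OF s1] by simp
  have i2: "(\<Sum>n. (norm (a (Suc n)))\<^sup>2 * r ^ (2 * Suc n)) \<le> (2 * lam) ^ 2 * (r ^ 2 * (1 / (1 - r ^ 2)))"
    using suminf_le[OF b2 sum2 sums_summable[OF s2]] sums_unique[OF s2] by simp
  have K: "0 \<le> 1 / (2 - lam) + r / (1 - r)" using l r by auto
  have "T_f a lam r \<le> 2 * lam * (r * (1 / (1 - r)))
        + (1 / (2 - lam) + r / (1 - r)) * ((2 * lam) ^ 2 * (r ^ 2 * (1 / (1 - r ^ 2))))"
    unfolding T_f_def using i1 mult_left_mono[OF i2 K] by linarith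
  also have "\<dots> = lam * psi lam r"
    unfolding psi_def by (simp add: algebra_simps power2_eq_square)
  finally show ?thesis .
qed

lemma image_ne_UNIV:
  fixes g :: "complex \<Rightarrow> complex"
  assumes g_holo: "g holomorphic_on ball 0 1" and g_inj: "inj_on g (ball 0 1)"
  shows "g ` ball 0 1 \<noteq> UNIV"
proof
  assume U: "g ` ball 0 1 = UNIV"
  obtain h where h: "h holomorphic_on (g ` ball 0 1)" "\<And>z. z \<in> ball 0 1 \<Longrightarrow> h (g z) = z"
    using holomorphic_has_inverse[OF g_holo open_ball g_inj] by metis
  have hU: "h holomorphic_on UNIV" using h(1) U by simp
  have "range h \<subseteq> ball 0 1"
  proof
    fix y assume "y \<in> range h"
    then obtain w where w: "y = h w" by auto
    have "w \<in> g ` ball 0 1" using U by simp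
    then obtain z where "z \<in> ball 0 1" "w = g z" by auto
    then show "y \<in> ball 0 1" using h(2) w by simp
  qed
  then have "bounded (range h)" using bounded_ball bounded_subset by blast
  from Liouville_theorem[OF hU this] obtain k where k: "\<And>x. h x = k"
    unfolding constant_on_def by auto
  have "0 = h (g 0)" using h(2)[of 0] by simp
  also have "\<dots> = h (g (1/2))" using k by simp
  also have "\<dots> = 1/2" using h(2)[of "1/2"] by simp
  finally show False by simp
qed

lemma coeff_bound:
  fixes f g :: "complex \<Rightarrow> complex" and a :: "nat \<Rightarrow> complex" and lam :: real
  assumes g_holo: "g holomorphic_on ball 0 1"
    and g_inj: "inj_on g (ball 0 1)"
    and g_convex: "convex (g ` ball 0 1)"
    and f_series: "\<forall>z\<in>ball 0 1. (\<lambda>n. a n * z ^ n) sums f z"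
    and sub: "subordinate f g"
    and lam_def: "lam = infdist (g 0) (frontier (g ` ball 0 1))"
    and k: "k \<ge> 1"
  shows "norm (a k) \<le> 2 * lam"
proof -
  define \<Omega> where "\<Omega> = g ` ball 0 1"
  have op: "open \<Omega>" unfolding \<Omega>_def by (rule open_mapping_thm3[OF g_holo open_ball g_inj])
  have ne: "\<Omega> \<noteq> {}" unfolding \<Omega>_def by auto
  have nU: "\<Omega> \<noteq> UNIV" unfolding \<Omega>_def by (rule image_ne_UNIV[OF g_holo g_inj])
  have fne: "frontier \<Omega> \<noteq> {}" by (rule frontier_not_empty[OF ne nU])
  obtain w0 where w0: "w0 \<in> frontier \<Omega>" "infdist (g 0) (frontier \<Omega>) = dist (g 0) w0"
    using infdist_attains_inf[OF frontier_closed fne] by metis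
  have lam: "lam = dist (g 0) w0" using w0 lam_def \<Omega>_def by simp
  have w0n: "w0 \<notin> \<Omega>" using w0(1) op frontier_disjoint_eq by blast
  obtain v bb where v: "v \<noteq> 0" "\<forall>x\<in>{w0}. inner v x \<le> bb" "\<forall>x\<in>\<Omega>. bb \<le> inner v x"
    using separating_hyperplane_sets[of "{w0}" \<Omega>] g_convex ne w0n unfolding \<Omega>_def by auto
  have sep: "inner v (x - w0) \<ge> 0" if "x \<in> \<Omega>" for x
  proof -
    have "inner v w0 \<le> bb" "bb \<le> inner v x" using v that by auto
    then show ?thesis by (simp add: inner_diff_right)
  qed
  obtain \<omega> where om: "\<omega> holomorphic_on ball 0 1" "\<omega> ` ball 0 1 \<subseteq> ball 0 1" "\<omega> 0 = 0"
      "\<forall>z\<in>ball 0 1. f z = g (\<omega> z)"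
    using sub unfolding subordinate_def by blast
  have fin: "f z \<in> \<Omega>" if "z \<in> ball 0 1" for z
  proof -
    have "\<omega> z \<in> ball 0 1" using om(2) that by blast
    then show ?thesis using om(4) that unfolding \<Omega>_def by auto
  qed
  have f0: "f 0 = g 0" using om by simp
  have a0: "a 0 = f 0"
  proof -
    have "(\<lambda>n. a n * 0 ^ n) sums f 0" using f_series[rule_format, of 0] by simp
    moreover have "(\<lambda>n. a n * 0 ^ n) sums a 0" by (rule powser_sums_zero)
    ultimately show ?thesis using sums_unique2 by metis
  qed
  define u where "u = v / of_real (norm v)"
  have nu: "norm u = 1" using v(1) by (simp add: u_def norm_divide)
  have inner_u: "Re (cnj u * y) = inner v y / norm v" for y
    by (simp add: u_def inner_complex_def field_simps)
  define c where "c k = cnj u * (if k = 0 then a 0 - w0 else a k)" for k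
  define F where "F z = cnj u * (f z - w0)" for z
  have S: "(\<lambda>k. c k * z ^ k) sums F z" if "norm z < 1" for z
  proof -
    have s: "(\<lambda>k. a k * z ^ k) sums f z" using f_series that by auto
    have "(\<lambda>k. a k * z ^ k + (if k = 0 then - w0 else 0)) sums (f z + - w0)"
      by (intro sums_add s) (rule sums_single)
    note s3 = sums_mult[OF this, of "cnj u"]
    have "(\<lambda>k. c k * z ^ k) = (\<lambda>n. cnj u * (a n * z ^ n + (if n = 0 then - w0 else 0)))"
      by (rule ext) (simp add: c_def algebra_simps)
    moreover have "F z = cnj u * (f z + - w0)" by (simp add: F_def)
    ultimately show ?thesis using s3 by simp
  qed
  have P: "Re (F z) \<ge> 0" if "norm z < 1" for z
  proof -
    have "f z \<in> \<Omega>" using fin that by simp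
    then show ?thesis using sep[of "f z"] unfolding F_def inner_u by simp
  qed
  have car: "norm (c k) \<le> 2 * Re (c 0)" by (rule carath[OF S P k])
  have ck: "norm (c k) = norm (a k)" using k nu by (simp add: c_def norm_mult)
  have "Re (c 0) = Re (cnj u * (g 0 - w0))" unfolding c_def using a0 f0 by simp
  also have "\<dots> = inner v (g 0 - w0) / norm v" by (rule inner_u)
  also have "\<dots> \<le> norm v * norm (g 0 - w0) / norm v"
    by (intro divide_right_mono norm_cauchy_schwarz) simp
  also have "\<dots> = lam" using v(1) lam by (simp add: dist_norm)
  finally show ?thesis using car ck by simp
qed

lemma Q_iff:
  assumes "lam \<le> 1" "0 \<le> r" "r < 1"
  shows "(Qp r lam = 0 \<longleftrightarrow> psi lam r = 1) \<and> (Qp r lam > 0 \<longleftrightarrow> psi lam r < 1)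
         \<and> (Qp r lam < 0 \<longleftrightarrow> psi lam r > 1)"
proof -
  define D where "D = (2 - lam) * (1 - r) ^ 2 * (1 + r)"
  have D: "D > 0" unfolding D_def by (rule fac_pos[OF assms])
  have e: "Qp r lam = (1 - psi lam r) * D" unfolding D_def using psi_Q[OF assms] by simp
  show ?thesis unfolding e using D
    by (auto simp: zero_less_mult_iff mult_less_0_iff)
qed

lemma cubic_eq: "3 * r ^ 3 - 5 * r ^ 2 - 3 * r + 1 = Qp r (1::real)"
  by (simp add: Qp_def)

lemma Qp_cont: "isCont (\<lambda>r. Qp r lam) x"
  unfolding Qp_def by (intro continuous_intros)

theorem theorem2:
  fixes f g :: "complex \<Rightarrow> complex" and a :: "nat \<Rightarrow> complex" and lam :: real
  assumes g_holo: "g holomorphic_on ball 0 1"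
    and g_inj: "inj_on g (ball 0 1)"
    and g_convex: "convex (g ` ball 0 1)"
    and f_holo: "f holomorphic_on ball 0 1"
    and f_series: "\<forall>z\<in>ball 0 1. (\<lambda>n. a n * z ^ n) sums f z"
    and sub: "subordinate f g"
    and lam_def: "lam = infdist (g 0) (frontier (g ` ball 0 1))"
    and lam_le: "lam \<le> 1"
  shows "(\<exists>!r::real. 0 < r \<and> r < 1 \<and> 3 * r ^ 3 - 5 * r ^ 2 - 3 * r + 1 = 0)
    \<and> (\<forall>r\<in>{0..r_star}. T_f a lam r \<le> lam)
    \<and> (0 < lam \<and> lam < 1 \<longrightarrow>
         (\<exists>!r0::real. r_star < r0 \<and> r0 < 1/3 \<and>
             4 * r0 ^ 3 * lam ^ 2 - (7 * r0 ^ 3 + 3 * r0 ^ 2 - 3 * r0 + 1) * lam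
             + 6 * r0 ^ 3 - 2 * r0 ^ 2 - 6 * r0 + 2 = 0)
       \<and> (\<forall>r0::real. r_star < r0 \<and> r0 < 1/3 \<and>
             4 * r0 ^ 3 * lam ^ 2 - (7 * r0 ^ 3 + 3 * r0 ^ 2 - 3 * r0 + 1) * lam
             + 6 * r0 ^ 3 - 2 * r0 ^ 2 - 6 * r0 + 2 = 0
           \<longrightarrow> (\<forall>r\<in>{0..r0}. T_f a lam r \<le> lam)))"
proof -
  have ab: "\<And>k. k \<ge> 1 \<Longrightarrow> norm (a k) \<le> 2 * lam"
    by (rule coeff_bound[OF g_holo g_inj g_convex f_series sub lam_def])
  have l0: "0 \<le> lam" unfolding lam_def by (rule infdist_nonneg)
  have uniq: "x = y" if "0 \<le> lam'" "lam' \<le> 1" "0 \<le> x" "x < 1" "0 \<le> y" "y < 1"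
      "psi lam' x = 1" "psi lam' y = 1" for lam' x y
  proof (rule ccontr)
    assume "x \<noteq> y"
    then consider "x < y" | "y < x" by linarith
    then show False
    proof cases
      case 1 then show ?thesis using psi_strict_r[of lam' x y] that by simp
    next
      case 2 then show ?thesis using psi_strict_r[of lam' y x] that by simp
    qed
  qed
  have A: "\<exists>!r::real. 0 < r \<and> r < 1 \<and> 3 * r ^ 3 - 5 * r ^ 2 - 3 * r + 1 = 0"
  proof -
    have "Qp (1/2) 1 \<le> 0" "0 \<le> Qp 0 1" by (simp_all add: Qp_def power2_eq_square power3_eq_cube)
    from IVT2[of "\<lambda>r. Qp r 1", OF this] Qp_cont
    obtain x where x: "0 \<le> x" "x \<le> 1/2" "Qp x 1 = 0" by auto
    have "x \<noteq> 0" using x by (auto simp: Qp_def)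
    then have ex: "0 < x \<and> x < 1 \<and> 3 * x ^ 3 - 5 * x ^ 2 - 3 * x + 1 = 0"
      using x cubic_eq[of x] by simp
    show ?thesis
    proof (rule ex1I[of _ x])
      show "0 < x \<and> x < 1 \<and> 3 * x ^ 3 - 5 * x ^ 2 - 3 * x + 1 = 0" by (rule ex)
    next
      fix y :: real assume y: "0 < y \<and> y < 1 \<and> 3 * y ^ 3 - 5 * y ^ 2 - 3 * y + 1 = 0"
      have "psi 1 y = 1" using Q_iff[of 1 y] y cubic_eq[of y] by simp
      moreover have "psi 1 x = 1" using Q_iff[of 1 x] ex cubic_eq[of x] by simp
      ultimately show "y = x" using uniq[of 1 y x] y ex by simp
    qed
  qed
  have rs: "0 < r_star" "r_star < 1" "3 * r_star ^ 3 - 5 * r_star ^ 2 - 3 * r_star + 1 = 0"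
    using theI'[OF A] unfolding r_star_def by auto
  have psi_rs: "psi 1 r_star = 1" using Q_iff[of 1 r_star] rs cubic_eq[of r_star] by simp
  have B: "\<forall>r\<in>{0..r_star}. T_f a lam r \<le> lam"
  proof
    fix r assume r: "r \<in> {0..r_star}"
    have "T_f a lam r \<le> lam * psi lam r" using Tf_bound[OF ab l0 lam_le] r rs by auto
    also have "\<dots> \<le> lam * psi 1 r_star"
      using r rs l0 lam_le by (intro mult_left_mono psi_mono) auto
    finally show "T_f a lam r \<le> lam" using psi_rs by simp
  qed
  have C: "(\<exists>!r0::real. r_star < r0 \<and> r0 < 1/3 \<and>
             4 * r0 ^ 3 * lam ^ 2 - (7 * r0 ^ 3 + 3 * r0 ^ 2 - 3 * r0 + 1) * lam
             + 6 * r0 ^ 3 - 2 * r0 ^ 2 - 6 * r0 + 2 = 0)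
       \<and> (\<forall>r0::real. r_star < r0 \<and> r0 < 1/3 \<and>
             4 * r0 ^ 3 * lam ^ 2 - (7 * r0 ^ 3 + 3 * r0 ^ 2 - 3 * r0 + 1) * lam
             + 6 * r0 ^ 3 - 2 * r0 ^ 2 - 6 * r0 + 2 = 0
           \<longrightarrow> (\<forall>r\<in>{0..r0}. T_f a lam r \<le> lam))" if lam: "0 < lam" "lam < 1"
  proof -
    have Qe: "4 * r0 ^ 3 * lam ^ 2 - (7 * r0 ^ 3 + 3 * r0 ^ 2 - 3 * r0 + 1) * lam
             + 6 * r0 ^ 3 - 2 * r0 ^ 2 - 6 * r0 + 2 = Qp r0 lam" for r0
      by (simp add: Qp_def)
    have q13: "Qp (1/3) lam' = 4/27 * lam' * (lam' - 4)" for lam'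
      by (simp add: Qp_def power2_eq_square power3_eq_cube algebra_simps)
    have "Qp (1/3) 1 < 0" by (simp add: q13)
    then have p13: "psi 1 (1/3) > 1" using Q_iff[of 1 "1/3"] by simp
    have rs13: "r_star < 1/3"
    proof (rule ccontr)
      assume "\<not> r_star < 1/3"
      then have "psi 1 (1/3) \<le> psi 1 r_star" using rs by (intro psi_mono) auto
      then show False using p13 psi_rs by simp
    qed
    have "psi lam r_star < 1" using psi_strict_lam[of lam r_star] lam rs psi_rs by simp
    then have qrs: "Qp r_star lam > 0" using Q_iff[of lam r_star] lam rs by simp
    have q3: "Qp (1/3) lam < 0" unfolding q13 using lam by (simp add: mult_pos_neg)
    have rootpsi: "psi lam r0 = 1" if "r_star < r0" "r0 < 1/3" "Qp r0 lam = 0" for r0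
      using Q_iff[of lam r0] that lam rs by simp
    have ex: "\<exists>r0. r_star < r0 \<and> r0 < 1/3 \<and> Qp r0 lam = 0"
    proof -
      from IVT2[of "\<lambda>r. Qp r lam" "1/3" 0 r_star] q3 qrs rs13 Qp_cont
      obtain x where x: "r_star \<le> x" "x \<le> 1/3" "Qp x lam = 0" by force
      have "x \<noteq> r_star" using x qrs by auto
      moreover have "x \<noteq> 1/3" proof
        assume h: "x = 1/3"
        have "Qp (1/3) lam = 0" using x(3) unfolding h .
        then show False using q3 by simp
      qed
      ultimately have "x \<noteq> r_star" "x \<noteq> 1/3" by auto
      then show ?thesis using x by force
    qed
    have E: "\<exists>!r0::real. r_star < r0 \<and> r0 < 1/3 \<and> Qp r0 lam = 0"
    proof -
      obtain x where x: "r_star < x \<and> x < 1/3 \<and> Qp x lam = 0" using ex by blast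
      show ?thesis
      proof (rule ex1I[of _ x])
        show "r_star < x \<and> x < 1/3 \<and> Qp x lam = 0" by (rule x)
      next
        fix y :: real assume y: "r_star < y \<and> y < 1/3 \<and> Qp y lam = 0"
        show "y = x" using uniq[of lam y x] rootpsi[of y] rootpsi[of x] x y lam rs by auto
      qed
    qed
    have F: "\<forall>r\<in>{0..r0}. T_f a lam r \<le> lam" if r0: "r_star < r0" "r0 < 1/3" "Qp r0 lam = 0" for r0
    proof
      fix r assume r: "r \<in> {0..r0}"
      have "T_f a lam r \<le> lam * psi lam r" using Tf_bound[OF ab l0 lam_le] r r0 by auto
      also have "\<dots> \<le> lam * psi lam r0"
        using r r0 l0 lam_le by (intro mult_left_mono psi_mono) auto
      finally show "T_f a lam r \<le> lam" using rootpsi[OF r0] by simp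
    qed
    show ?thesis unfolding Qe using E F by blast
  qed
  show ?thesis using A B C by blast
qed

end
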